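(* Fix $\delta\in(0,1)$ and let $n_h\ge 32\,\frac{\log(4|\mathcal{X}|^2/\delta)}{(1-\gamma)^2}$. Let $\widehat P=\frac1{n_h}\sum_{i\in I_1}Z_i$ and $\widetilde P=\frac1{n_h}\sum_{i\in I_2}Z_i$ be hold-out estimates formed from two disjoint sets $I_1,I_2$ of $n_h$ i.i.d. generative transition samples each. Then for any (fixed) positive semidefinite $|\mathcal{X}|\times|\mathcal{X}|$ matrix $M$, with probability at least $1-\delta$, $$\|(I-\gamma\widehat P)^{-1}M(I-\gamma\widetilde P)^{-\top}\|_{\mathrm{diag}}\le 3\,\|(I-\gamma P)^{-1}M(I-\gamma P)^{-\top}\|_{\mathrm{diag}}.$$
   Context: Finite state space $\mathcal{X}$, discount $\gamma\in(0,1)$, row-stochastic transition matrix $P$ (row $x$ is $P(\cdot\mid x)$). A generative transition sample is a random $|\mathcal{X}|\times|\mathcal{X}|$ matrix $Z$ whose row $x$ equals $e_{x'}^\top$ with $x'\sim P(\cdot\mid x)$; samples are i.i.d. For a square matrix $A$, $\|A\|_{\mathrm{diag}}:=\max_i|A_{ii}|$. *)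

theory Defs
  imports "HOL-Analysis.Analysis" "HOL-Probability.Probability"
begin

definition row_stochastic :: "real^'x^'x \<Rightarrow> bool" where
  "row_stochastic P \<longleftrightarrow> (\<forall>x y. 0 \<le> P$x$y) \<and> (\<forall>x. (\<Sum>y\<in>UNIV. P$x$y) = 1)"

definition row_pmf :: "real^'x^'x \<Rightarrow> 'x \<Rightarrow> 'x pmf" where
  "row_pmf P x = embed_pmf (\<lambda>y. P$x$y)"

text \<open>One generative transition sample, encoded as the successor map (each row drawn independently).\<close>
definition sample_pmf :: "real^'x^'x \<Rightarrow> ('x::finite \<Rightarrow> 'x) pmf" where
  "sample_pmf P = Pi_pmf UNIV undefined (\<lambda>x. row_pmf P x)"

definition Zmat :: "('x::finite \<Rightarrow> 'x) \<Rightarrow> real^'x^'x" where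
  "Zmat f = (\<chi> x y. if f x = y then 1 else 0)"

definition samples_pmf :: "real^'x^'x \<Rightarrow> nat \<Rightarrow> (nat \<Rightarrow> ('x::finite \<Rightarrow> 'x)) pmf" where
  "samples_pmf P n = Pi_pmf {..<n} undefined (\<lambda>_. sample_pmf P)"

definition empirical :: "nat \<Rightarrow> (nat \<Rightarrow> ('x::finite \<Rightarrow> 'x)) \<Rightarrow> real^'x^'x" where
  "empirical n \<omega> = (1 / real n) *\<^sub>R (\<Sum>i<n. Zmat (\<omega> i))"

definition diag_norm :: "real^'x^'x \<Rightarrow> real" where
  "diag_norm A = Max (range (\<lambda>i::'x::finite. \<bar>A$i$i\<bar>))"

definition psd :: "real^'x^'x \<Rightarrow> bool" where
  "psd M \<longleftrightarrow> transpose M = M \<and> (\<forall>v. 0 \<le> v \<bullet> (M *v v))"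

end

theory Submission
  imports Defs
begin

lemma exp_pair_fin:
  fixes f :: "'a \<times> 'b \<Rightarrow> real"
  assumes "finite (set_pmf A)" "finite (set_pmf B)"
  shows "measure_pmf.expectation (pair_pmf A B) f =
         measure_pmf.expectation A (\<lambda>a. measure_pmf.expectation B (\<lambda>b. f (a,b)))"
proof -
  have "measure_pmf.expectation (pair_pmf A B) f = (\<Sum>x\<in>set_pmf A \<times> set_pmf B. f x * pmf (pair_pmf A B) x)"
    using assms by (intro integral_measure_pmf_real) auto
  also have "\<dots> = (\<Sum>a\<in>set_pmf A. (\<Sum>b\<in>set_pmf B. f (a,b) * pmf B b) * pmf A a)"
    apply (simp add: sum.cartesian_product pmf_pair sum_distrib_right sum_distrib_left mult_ac split_beta)
    apply (intro sum.cong refl) by (metis pmf_pair prod.collapse)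
  also have "\<dots> = measure_pmf.expectation A (\<lambda>a. measure_pmf.expectation B (\<lambda>b. f (a,b)))"
    using assms by (subst integral_measure_pmf_real[where A="set_pmf A"]) (auto simp: integral_measure_pmf_real[where A="set_pmf B"])
  finally show ?thesis .
qed

lemma finite_set_Pi_pmf:
  assumes "finite I" "\<And>i. i \<in> I \<Longrightarrow> finite (set_pmf (p i))"
  shows "finite (set_pmf (Pi_pmf I d p))"
proof -
  have "set_pmf (Pi_pmf I d p) = PiE_dflt I d (\<lambda>i. set_pmf (p i))"
    using assms by (simp add: set_Pi_pmf o_def)
  moreover have "finite (PiE_dflt I d (\<lambda>i. set_pmf (p i)))"
    using assms by (intro finite_PiE_dflt) auto
  ultimately show ?thesis by simp
qed

lemma exp_pair_fin2:
  fixes f :: "'a \<times> 'b \<Rightarrow> real"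
  assumes "finite (set_pmf A)" "finite (set_pmf B)"
  shows "measure_pmf.expectation (pair_pmf A B) f =
         measure_pmf.expectation B (\<lambda>b. measure_pmf.expectation A (\<lambda>a. f (a,b)))"
proof -
  have "measure_pmf.expectation (pair_pmf A B) f =
         measure_pmf.expectation A (\<lambda>a. measure_pmf.expectation B (\<lambda>b. f (a,b)))"
    by (rule exp_pair_fin[OF assms])
  also have "\<dots> = (\<Sum>a\<in>set_pmf A. (\<Sum>b\<in>set_pmf B. f (a,b) * pmf B b) * pmf A a)"
    using assms by (subst integral_measure_pmf_real[where A="set_pmf A"]) (auto simp: integral_measure_pmf_real[where A="set_pmf B"])
  also have "\<dots> = (\<Sum>b\<in>set_pmf B. (\<Sum>a\<in>set_pmf A. f (a,b) * pmf A a) * pmf B b)"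
    by (simp add: sum_distrib_right sum_distrib_left mult_ac sum.swap[of _ "set_pmf A"])
  also have "\<dots> = measure_pmf.expectation B (\<lambda>b. measure_pmf.expectation A (\<lambda>a. f (a,b)))"
    using assms by (subst integral_measure_pmf_real[where A="set_pmf B"]) (auto simp: integral_measure_pmf_real[where A="set_pmf A"])
  finally show ?thesis .
qed

lemma exp_le_const:
  fixes h :: "'a \<Rightarrow> real"
  assumes "finite (set_pmf D)" "\<And>y. y \<in> set_pmf D \<Longrightarrow> h y \<le> c"
  shows "measure_pmf.expectation D h \<le> c"
proof -
  have "measure_pmf.expectation D h \<le> measure_pmf.expectation D (\<lambda>_. c)"
    using assms by (intro integral_mono_AE) (auto intro: integrable_measure_pmf_finite AE_pmfI)
  thus ?thesis by simp
qed

lemma exp_abs_le_const: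
  fixes h :: "'a \<Rightarrow> real"
  assumes "finite (set_pmf D)" "\<And>y. y \<in> set_pmf D \<Longrightarrow> \<bar>h y\<bar> \<le> c"
  shows "\<bar>measure_pmf.expectation D h\<bar> \<le> c"
proof -
  have "\<bar>measure_pmf.expectation D h\<bar> \<le> measure_pmf.expectation D (\<lambda>y. \<bar>h y\<bar>)"
    using integral_abs_bound[of D h] by simp
  also have "\<dots> \<le> c" using assms by (intro exp_le_const) auto
  finally show ?thesis .
qed

lemma hoeffding_pmf:
  fixes h :: "'a \<Rightarrow> real"
  assumes fin: "finite (set_pmf D)" and l: "l > 0"
    and bd: "\<And>x y. x \<in> set_pmf D \<Longrightarrow> y \<in> set_pmf D \<Longrightarrow> \<bar>h x - h y\<bar> \<le> c"
  shows "measure_pmf.expectation D (\<lambda>x. exp (l * (h x - measure_pmf.expectation D h))) \<le> exp (l^2 * c^2 / 8)"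
proof -
  define a where "a = Min (h ` set_pmf D)"
  have ne: "set_pmf D \<noteq> {}" by (rule set_pmf_not_empty)
  have ain: "\<And>x. x \<in> set_pmf D \<Longrightarrow> h x \<in> {a..a+c}"
  proof -
    fix x assume x: "x \<in> set_pmf D"
    have "a \<in> h ` set_pmf D" unfolding a_def using fin ne by (intro Min_in) auto
    then obtain y where y: "y \<in> set_pmf D" "a = h y" by auto
    have "a \<le> h x" unfolding a_def using fin x by (intro Min_le) auto
    moreover have "h x - h y \<le> c" using bd[OF x y(1)] by simp
    ultimately show "h x \<in> {a..a+c}" using y by auto
  qed
  interpret interval_bounded_random_variable "measure_pmf D" h a "a + c"
    proof (intro interval_bounded_random_variable.intro interval_bounded_random_variable_axioms.intro)
    show "prob_space (measure_pmf D)" by (rule measure_pmf.prob_space_axioms)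
    show "h \<in> borel_measurable (measure_pmf D)" by simp
    show "AE x in measure_pmf D. h x \<in> {a..a + c}" by (intro AE_pmfI ain)
  qed
  have "ennreal (measure_pmf.expectation D (\<lambda>x. exp (l * (h x - measure_pmf.expectation D h))))
      = nn_integral D (\<lambda>x. exp (l * (h x - measure_pmf.expectation D h)))"
    by (intro nn_integral_eq_integral[symmetric] integrable_measure_pmf_finite fin) auto
  also have "\<dots> \<le> ennreal (exp (l\<^sup>2 * (a + c - a)\<^sup>2 / 8))"
    by (rule Hoeffdings_lemma_nn_integral[OF l])
  finally have "ennreal (measure_pmf.expectation D (\<lambda>x. exp (l * (h x - measure_pmf.expectation D h)))) \<le> ennreal (exp (l^2 * c^2 / 8))" by simp
  thus ?thesis by (rule ennreal_le_iff[THEN iffD1, rotated]) simp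
qed

lemma mcdiarmid_mgf:
  fixes D :: "'a pmf" and c l :: real and f :: "(nat \<Rightarrow> 'a) \<Rightarrow> real"
  assumes fin: "finite (set_pmf D)" and l: "l > 0"
  shows "(\<And>w i x y. i < n \<Longrightarrow> x \<in> set_pmf D \<Longrightarrow> y \<in> set_pmf D \<Longrightarrow> \<bar>f (w(i:=x)) - f (w(i:=y))\<bar> \<le> c) \<Longrightarrow>
    measure_pmf.expectation (Pi_pmf {..<n} d (\<lambda>_. D))
      (\<lambda>w. exp (l * (f w - measure_pmf.expectation (Pi_pmf {..<n} d (\<lambda>_. D)) f)))
    \<le> exp (l^2 * real n * c^2 / 8)"
proof (induction n arbitrary: f)
  case 0
  then show ?case by simp
next
  case (Suc n)
  let ?Q = "Pi_pmf {..<n} d (\<lambda>_. D)"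
  let ?S = "Pi_pmf {..<Suc n} d (\<lambda>_. D)"
  have split: "?S = map_pmf (\<lambda>(y,w). w(n:=y)) (pair_pmf D ?Q)"
    unfolding lessThan_Suc by (subst Pi_pmf_insert) auto
  have finQ: "finite (set_pmf ?Q)" by (intro finite_set_Pi_pmf fin) auto
  define g where "g w = measure_pmf.expectation D (\<lambda>y. f (w(n:=y)))" for w
  have gbd: "\<bar>g (w(i:=x)) - g (w(i:=y))\<bar> \<le> c"
    if i: "i < n" and x: "x \<in> set_pmf D" and y: "y \<in> set_pmf D" for w i x y
  proof -
    have "g (w(i:=x)) - g (w(i:=y)) = measure_pmf.expectation D (\<lambda>z. f (w(i:=x, n:=z)) - f (w(i:=y, n:=z)))"
      unfolding g_def by (intro Bochner_Integration.integral_diff[symmetric] integrable_measure_pmf_finite fin)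
    also have "\<bar>\<dots>\<bar> \<le> c"
    proof (intro exp_abs_le_const fin)
      fix z
      have "w(i:=x, n:=z) = (w(n:=z))(i:=x)" "w(i:=y, n:=z) = (w(n:=z))(i:=y)"
        using i by (auto simp: fun_eq_iff)
      thus "\<bar>f (w(i:=x, n:=z)) - f (w(i:=y, n:=z))\<bar> \<le> c"
        by (simp only:) (rule Suc.prems, use i x y in auto)
    qed
    finally show ?thesis .
  qed
  have IH: "measure_pmf.expectation ?Q (\<lambda>w. exp (l * (g w - measure_pmf.expectation ?Q g)))
    \<le> exp (l^2 * real n * c^2 / 8)"
    by (rule Suc.IH) (rule gbd)
  have Ef: "measure_pmf.expectation ?S f = measure_pmf.expectation ?Q g"
    unfolding split g_def by (simp add: exp_pair_fin2[OF fin finQ] case_prod_beta)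
  have hoef: "measure_pmf.expectation D (\<lambda>y. exp (l * (f (w(n:=y)) - g w))) \<le> exp (l^2 * c^2 / 8)" for w
    unfolding g_def
    by (rule hoeffding_pmf[OF fin l]) (rule Suc.prems, auto)
  have eq: "\<And>a b c. exp (l * (a - b)) = exp (l * (c - b)) * exp (l * (a - c))"
    by (simp add: exp_add[symmetric] right_diff_distrib)
  have "measure_pmf.expectation ?S (\<lambda>w. exp (l * (f w - measure_pmf.expectation ?S f)))
     = measure_pmf.expectation ?Q (\<lambda>w. measure_pmf.expectation D
          (\<lambda>y. exp (l * (f (w(n:=y)) - measure_pmf.expectation ?Q g))))"
    unfolding Ef unfolding split integral_map_pmf exp_pair_fin2[OF fin finQ] by (simp add: case_prod_beta)
  also have "\<dots> = measure_pmf.expectation ?Q (\<lambda>w. measure_pmf.expectation D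
          (\<lambda>y. exp (l * (g w - measure_pmf.expectation ?Q g)) * exp (l * (f (w(n:=y)) - g w))))"
    by (intro Bochner_Integration.integral_cong refl eq)
  also have "\<dots> = measure_pmf.expectation ?Q (\<lambda>w. exp (l * (g w - measure_pmf.expectation ?Q g)) *
          measure_pmf.expectation D (\<lambda>y. exp (l * (f (w(n:=y)) - g w))))"
    by simp
  also have "\<dots> \<le> measure_pmf.expectation ?Q (\<lambda>w. exp (l * (g w - measure_pmf.expectation ?Q g)) * exp (l^2 * c^2 / 8))"
    by (intro integral_mono integrable_measure_pmf_finite finQ mult_left_mono hoef) auto
  also have "\<dots> = measure_pmf.expectation ?Q (\<lambda>w. exp (l * (g w - measure_pmf.expectation ?Q g))) * exp (l^2 * c^2 / 8)"
    by simp
  also have "\<dots> \<le> exp (l^2 * real n * c^2 / 8) * exp (l^2 * c^2 / 8)"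
    by (intro mult_right_mono IH) auto
  also have "\<dots> = exp (l^2 * real (Suc n) * c^2 / 8)"
    by (simp add: exp_add[symmetric] distrib_left distrib_right add_divide_distrib)
  finally show ?case .
qed

lemma mcdiarmid_tail:
  fixes D :: "'a pmf" and c t :: real and f :: "(nat \<Rightarrow> 'a) \<Rightarrow> real"
  assumes fin: "finite (set_pmf D)" and t: "t > 0" and c: "c > 0" and n: "n > 0"
    and bd: "\<And>w i x y. i < n \<Longrightarrow> x \<in> set_pmf D \<Longrightarrow> y \<in> set_pmf D \<Longrightarrow> \<bar>f (w(i:=x)) - f (w(i:=y))\<bar> \<le> c"
  shows "measure_pmf.prob (Pi_pmf {..<n} d (\<lambda>_. D))
      {w. f w - measure_pmf.expectation (Pi_pmf {..<n} d (\<lambda>_. D)) f \<ge> t}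
    \<le> exp (- 2 * t^2 / (real n * c^2))"
proof -
  let ?Q = "Pi_pmf {..<n} d (\<lambda>_. D)"
  let ?E = "measure_pmf.expectation ?Q f"
  define l where "l = 4 * t / (real n * c^2)"
  have l: "l > 0" unfolding l_def using t c n by auto
  have finQ: "finite (set_pmf ?Q)" by (intro finite_set_Pi_pmf fin) auto
  have "measure_pmf.prob ?Q {w. f w - ?E \<ge> t} = measure_pmf.expectation ?Q (indicator {w. f w - ?E \<ge> t})"
    by simp
  also have "\<dots> \<le> measure_pmf.expectation ?Q (\<lambda>w. exp (l * (f w - ?E)) / exp (l * t))"
  proof (intro integral_mono integrable_measure_pmf_finite finQ)
    fix w
    show "indicator {w. f w - ?E \<ge> t} w \<le> exp (l * (f w - ?E)) / exp (l * t)"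
    proof (cases "f w - ?E \<ge> t")
      case True
      hence "l * t \<le> l * (f w - ?E)" using l by (intro mult_left_mono) auto
      hence "exp (l * t) \<le> exp (l * (f w - ?E))" by simp
      thus ?thesis using True by simp
    qed simp
  qed
  also have "\<dots> = measure_pmf.expectation ?Q (\<lambda>w. exp (l * (f w - ?E))) / exp (l * t)"
    by simp
  also have "\<dots> \<le> exp (l^2 * real n * c^2 / 8) / exp (l * t)"
    by (intro divide_right_mono mcdiarmid_mgf[OF fin l] bd) auto
  also have "\<dots> = exp (- 2 * t^2 / (real n * c^2))"
  proof -
    have "l^2 * real n * c^2 / 8 - l * t = - 2 * t^2 / (real n * c^2)"
      unfolding l_def using c n by (simp add: field_simps power2_eq_square)
    thus ?thesis by (simp flip: exp_diff)
  qed
  finally show ?thesis .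
qed

lemma exp_le_sqrt_sq:
  fixes f :: "'a \<Rightarrow> real"
  assumes fin: "finite (set_pmf D)"
  shows "measure_pmf.expectation D f \<le> sqrt (measure_pmf.expectation D (\<lambda>x. (f x)^2))"
proof -
  have "0 \<le> measure_pmf.expectation D (\<lambda>x. (f x - measure_pmf.expectation D f)^2)"
    by (intro Bochner_Integration.integral_nonneg) auto
  also have "\<dots> = measure_pmf.expectation D (\<lambda>x. (f x)^2) - (measure_pmf.expectation D f)^2"
    by (intro measure_pmf.variance_eq integrable_measure_pmf_finite fin)
  finally have "(measure_pmf.expectation D f)^2 \<le> measure_pmf.expectation D (\<lambda>x. (f x)^2)" by simp
  hence "sqrt ((measure_pmf.expectation D f)^2) \<le> sqrt (measure_pmf.expectation D (\<lambda>x. (f x)^2))"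
    by (rule real_sqrt_le_mono)
  thus ?thesis by simp
qed

definition ipM :: "real^'x::finite^'x \<Rightarrow> real^'x \<Rightarrow> real^'x \<Rightarrow> real" where
  "ipM M u v = u \<bullet> (M *v v)"

lemma ipM_add_left: "ipM M (u + v) w = ipM M u w + ipM M v w"
  by (simp add: ipM_def inner_add_left)
lemma ipM_add_right: "ipM M w (u + v) = ipM M w u + ipM M w v"
  by (simp add: ipM_def inner_add_right matrix_vector_right_distrib)
lemma ipM_diff_left: "ipM M (u - v) w = ipM M u w - ipM M v w"
  by (simp add: ipM_def inner_diff_left)
lemma ipM_diff_right: "ipM M w (u - v) = ipM M w u - ipM M w v"
  by (simp add: ipM_def inner_diff_right matrix_vector_mult_diff_distrib)
lemma ipM_scale_left: "ipM M (a *\<^sub>R u) w = a * ipM M u w"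
  by (simp add: ipM_def)
lemma ipM_scale_right: "ipM M w (a *\<^sub>R u) = a * ipM M w u"
  by (simp add: ipM_def matrix_vector_mult_scaleR)
lemma ipM_zero_right [simp]: "ipM M w 0 = 0"
  by (simp add: ipM_def)
lemma ipM_zero_left [simp]: "ipM M 0 w = 0"
  by (simp add: ipM_def)
lemma ipM_sym: "transpose M = M \<Longrightarrow> ipM M u v = ipM M v u"
  unfolding ipM_def
  by (metis dot_lmul_matrix inner_commute transpose_matrix_vector)

lemma ipM_expand: "ipM M u v = (\<Sum>k\<in>UNIV. \<Sum>l\<in>UNIV. u$k * M$k$l * v$l)"
  by (simp add: ipM_def inner_vec_def matrix_vector_mult_def sum_distrib_left mult.assoc)

lemma ipM_expectation:
  fixes Y :: "'a \<Rightarrow> real^'x::finite"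
  assumes fin: "finite (set_pmf D)"
  shows "measure_pmf.expectation D (\<lambda>s. ipM M v (Y s)) = ipM M v (\<chi> l. measure_pmf.expectation D (\<lambda>s. Y s $ l))"
  unfolding ipM_expand
  by (simp add: Bochner_Integration.integral_sum integrable_measure_pmf_finite[OF fin])

locale psdM =
  fixes M :: "real^'x::finite^'x"
  assumes symM: "transpose M = M" and posM: "\<And>v. 0 \<le> v \<bullet> (M *v v)"
begin

lemma ip_nonneg: "0 \<le> ipM M u u"
  using posM by (simp add: ipM_def)

lemma ip_sym: "ipM M u v = ipM M v u"
  by (rule ipM_sym[OF symM])

lemma ip_quad: "ipM M (u - t *\<^sub>R v) (u - t *\<^sub>R v) = ipM M u u - 2 * t * ipM M u v + t^2 * ipM M v v"
  by (simp add: ipM_diff_left ipM_diff_right ipM_scale_left ipM_scale_right ip_sym[of v u]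
      power2_eq_square algebra_simps)

lemma cs_sq: "(ipM M u v)^2 \<le> ipM M u u * ipM M v v"
proof -
  define a where "a = ipM M u u"
  define b where "b = ipM M u v"
  define c where "c = ipM M v v"
  have q: "0 \<le> a - 2 * t * b + t^2 * c" for t
    using ip_nonneg[of "u - t *\<^sub>R v"] unfolding ip_quad a_def b_def c_def .
  have c0: "0 \<le> c" unfolding c_def by (rule ip_nonneg)
  show ?thesis
  proof (cases "c = 0")
    case True
    have "b = 0"
    proof (rule ccontr)
      assume b: "b \<noteq> 0"
      have "0 \<le> a - 2 * ((a + 1) / (2 * b)) * b" using q[of "(a + 1) / (2 * b)"] True by simp
      also have "\<dots> = -1" using b by (simp add: field_simps)
      finally show False by simp
    qed
    thus ?thesis using True by (simp add: b_def c_def)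
  next
    case False
    hence cp: "c > 0" using c0 by simp
    have "0 \<le> a - 2 * (b / c) * b + (b / c)^2 * c" by (rule q)
    also have "\<dots> = (a * c - b^2) / c" using cp by (simp add: field_simps power2_eq_square)
    finally have "0 \<le> a * c - b^2" using cp by (simp add: divide_nonneg_pos zero_le_divide_iff)
    thus ?thesis by (simp add: a_def b_def c_def)
  qed
qed

definition qn :: "real^'x \<Rightarrow> real" where "qn u = sqrt (ipM M u u)"

lemma qn_nonneg: "0 \<le> qn u" unfolding qn_def by (rule real_sqrt_ge_zero[OF ip_nonneg])

lemma qn_sq: "(qn u)^2 = ipM M u u"
  unfolding qn_def by (rule real_sqrt_pow2[OF ip_nonneg])

lemma cs: "\<bar>ipM M u v\<bar> \<le> qn u * qn v"
proof -
  have "\<bar>ipM M u v\<bar> = sqrt ((ipM M u v)^2)" by simp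
  also have "\<dots> \<le> sqrt (ipM M u u * ipM M v v)" by (rule real_sqrt_le_mono[OF cs_sq])
  also have "\<dots> = qn u * qn v" by (simp add: qn_def real_sqrt_mult)
  finally show ?thesis .
qed

lemma qn_add: "qn (u + v) \<le> qn u + qn v"
proof -
  have "(qn (u + v))^2 = (qn u)^2 + 2 * ipM M u v + (qn v)^2"
    by (simp add: qn_sq ipM_add_left ipM_add_right ip_sym[of v u])
  also have "\<dots> \<le> (qn u)^2 + 2 * (qn u * qn v) + (qn v)^2"
    using cs[of u v] by simp
  also have "\<dots> = (qn u + qn v)^2" by (simp add: power2_eq_square algebra_simps)
  finally show ?thesis
    by (rule power2_le_imp_le) (simp add: qn_nonneg add_nonneg_nonneg)
qed

lemma qn_scale: "qn (a *\<^sub>R u) = \<bar>a\<bar> * qn u"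
  by (simp add: qn_def ipM_scale_left ipM_scale_right real_sqrt_mult mult.assoc[symmetric] power2_eq_square[symmetric])

lemma qn_minus: "qn (- u) = qn u"
  using qn_scale[of "-1" u] by simp

lemma qn_diff: "qn (u - v) \<le> qn u + qn v"
  using qn_add[of u "- v"] qn_minus[of v] by simp

lemma qn_sum: "qn (sum f S) \<le> (\<Sum>i\<in>S. qn (f i))"
proof (induction S rule: infinite_finite_induct)
  case (infinite S) then show ?case by (simp add: qn_def)
next
  case empty then show ?case by (simp add: qn_def)
next
  case (insert x F)
  then show ?case using qn_add[of "f x" "sum f F"] by simp
qed

lemma second_moment:
  fixes Y :: "'a \<Rightarrow> real^'x" and D :: "'a pmf"
  assumes fin: "finite (set_pmf D)"
    and mean0: "\<And>l. measure_pmf.expectation D (\<lambda>s. Y s $ l) = 0"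
    and bd: "\<And>s. s \<in> set_pmf D \<Longrightarrow> ipM M (Y s) (Y s) \<le> K"
  shows "measure_pmf.expectation (Pi_pmf {..<n} d (\<lambda>_. D))
           (\<lambda>w. ipM M (\<Sum>t<n. Y (w t)) (\<Sum>t<n. Y (w t))) \<le> real n * K"
proof (induction n)
  case 0 then show ?case by simp
next
  case (Suc n)
  let ?Q = "Pi_pmf {..<n} d (\<lambda>_. D)"
  have split: "Pi_pmf {..<Suc n} d (\<lambda>_. D) = map_pmf (\<lambda>(y,w). w(n:=y)) (pair_pmf D ?Q)"
    unfolding lessThan_Suc by (subst Pi_pmf_insert) auto
  have finQ: "finite (set_pmf ?Q)" by (intro finite_set_Pi_pmf fin) auto
  define F where "F w = (\<Sum>t<n. Y (w t))" for w
  have sumeq: "(\<Sum>t<Suc n. Y ((w(n:=y)) t)) = F w + Y y" for w y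
  proof -
    have "(\<Sum>t<n. Y ((w(n:=y)) t)) = F w" unfolding F_def by (intro sum.cong) auto
    thus ?thesis by simp
  qed
  have inner: "measure_pmf.expectation D (\<lambda>y. ipM M (F w + Y y) (F w + Y y)) \<le> ipM M (F w) (F w) + K" for w
  proof -
    have e: "ipM M (F w + Y y) (F w + Y y) = ipM M (F w) (F w) + 2 * ipM M (F w) (Y y) + ipM M (Y y) (Y y)" for y
      by (simp add: ipM_add_left ipM_add_right ip_sym[of "Y y" "F w"])
    have z: "measure_pmf.expectation D (\<lambda>y. ipM M (F w) (Y y)) = 0"
    proof -
      have "(\<chi> l. measure_pmf.expectation D (\<lambda>s. Y s $ l)) = 0" by (simp add: mean0 vec_eq_iff)
      thus ?thesis by (simp add: ipM_expectation[OF fin])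
    qed
    have "measure_pmf.expectation D (\<lambda>y. ipM M (F w + Y y) (F w + Y y)) =
          ipM M (F w) (F w) + 2 * measure_pmf.expectation D (\<lambda>y. ipM M (F w) (Y y))
          + measure_pmf.expectation D (\<lambda>y. ipM M (Y y) (Y y))"
      unfolding e
      by (subst Bochner_Integration.integral_add, (intro integrable_measure_pmf_finite fin)+)+ simp
    also have "measure_pmf.expectation D (\<lambda>y. ipM M (Y y) (Y y)) \<le> K"
      by (intro exp_le_const fin bd)
    finally show ?thesis using z by simp
  qed
  have "measure_pmf.expectation (Pi_pmf {..<Suc n} d (\<lambda>_. D))
           (\<lambda>w. ipM M (\<Sum>t<Suc n. Y (w t)) (\<Sum>t<Suc n. Y (w t)))
      = measure_pmf.expectation ?Q (\<lambda>w. measure_pmf.expectation D (\<lambda>y. ipM M (F w + Y y) (F w + Y y)))"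
    unfolding split integral_map_pmf exp_pair_fin2[OF fin finQ] by (simp add: case_prod_beta sumeq F_def)
  also have "\<dots> \<le> measure_pmf.expectation ?Q (\<lambda>w. ipM M (F w) (F w) + K)"
    by (intro integral_mono integrable_measure_pmf_finite finQ inner)
  also have "\<dots> = measure_pmf.expectation ?Q (\<lambda>w. ipM M (F w) (F w)) + K"
    by (subst Bochner_Integration.integral_add) (auto intro: integrable_measure_pmf_finite finQ)
  also have "\<dots> \<le> real n * K + K" using Suc.IH unfolding F_def by simp
  finally show ?case by (simp add: algebra_simps)
qed

end

definition stoch :: "real^'x::finite^'x \<Rightarrow> bool" where
  "stoch Q \<longleftrightarrow> (\<forall>x y. 0 \<le> Q$x$y) \<and> (\<forall>x. (\<Sum>y\<in>UNIV. Q$x$y) = 1)"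

lemma IgQ_apply: "((mat 1 - g *\<^sub>R Q) *v x) $ i = x $ i - g * (\<Sum>j\<in>UNIV. Q$i$j * x$j)"
proof -
  have "(mat 1 - g *\<^sub>R Q) *v x = x - g *\<^sub>R (Q *v x)"
    by (simp add: matrix_vector_mult_diff_rdistrib scaleR_matrix_vector_assoc)
  thus ?thesis by (simp add: matrix_vector_mult_def)
qed

lemma stoch_avg_le:
  assumes "stoch Q" "\<And>j. x$j \<le> m"
  shows "(\<Sum>j\<in>UNIV. Q$i$j * x$j) \<le> m"
proof -
  have "(\<Sum>j\<in>UNIV. Q$i$j * x$j) \<le> (\<Sum>j\<in>UNIV. Q$i$j * m)"
    using assms by (intro sum_mono mult_left_mono) (auto simp: stoch_def)
  also have "\<dots> = m" using assms by (simp add: stoch_def sum_distrib_right[symmetric])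
  finally show ?thesis .
qed

lemma stoch_avg_ge:
  assumes "stoch Q" "\<And>j. m \<le> x$j"
  shows "m \<le> (\<Sum>j\<in>UNIV. Q$i$j * x$j)"
proof -
  have "(\<Sum>j\<in>UNIV. Q$i$j * m) \<le> (\<Sum>j\<in>UNIV. Q$i$j * x$j)"
    using assms by (intro sum_mono mult_left_mono) (auto simp: stoch_def)
  moreover have "(\<Sum>j\<in>UNIV. Q$i$j * m) = m" using assms by (simp add: stoch_def sum_distrib_right[symmetric])
  ultimately show ?thesis by simp
qed

context
  fixes Q :: "real^'x::finite^'x" and g :: real
  assumes Q: "stoch Q" and g0: "0 \<le> g" and g1: "g < 1"
begin

lemma IgQ_ker: "(mat 1 - g *\<^sub>R Q) *v x = 0 \<Longrightarrow> x = 0"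
proof -
  assume h: "(mat 1 - g *\<^sub>R Q) *v x = 0"
  have xe: "x$i = g * (\<Sum>j\<in>UNIV. Q$i$j * x$j)" for i
    using arg_cong[OF h, of "\<lambda>v. v$i"] by (simp add: IgQ_apply)
  define m where "m = Max (range (\<lambda>j. \<bar>x$j\<bar>))"
  have mge: "\<bar>x$j\<bar> \<le> m" for j unfolding m_def by (intro Max_ge) auto
  have "m \<in> range (\<lambda>j. \<bar>x$j\<bar>)" unfolding m_def by (rule Max_in) auto
  then obtain i where i: "\<bar>x$i\<bar> = m" by auto
  have mge2: "- m \<le> x$j" "x$j \<le> m" for j using mge[of j] by auto
  have up: "(\<Sum>j\<in>UNIV. Q$i$j * x$j) \<le> m" by (intro stoch_avg_le Q mge2)
  have lo: "- m \<le> (\<Sum>j\<in>UNIV. Q$i$j * x$j)" by (intro stoch_avg_ge Q mge2)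
  have "m \<le> g * m"
  proof -
    have "m = \<bar>g * (\<Sum>j\<in>UNIV. Q$i$j * x$j)\<bar>" using i xe[of i] by simp
    also have "\<dots> = g * \<bar>\<Sum>j\<in>UNIV. Q$i$j * x$j\<bar>" using g0 by (simp add: abs_mult)
    also have "\<dots> \<le> g * m" using up lo g0 by (intro mult_left_mono) auto
    finally show ?thesis .
  qed
  hence "(1 - g) * m \<le> 0" by (simp add: algebra_simps)
  moreover have "0 < 1 - g" using g1 by simp
  ultimately have "m \<le> 0" by (simp add: mult_le_0_iff)
  hence "\<bar>x$j\<bar> = 0" for j using mge[of j] by simp
  thus "x = 0" by (simp add: vec_eq_iff)
qed

lemma IgQ_invertible: "invertible (mat 1 - g *\<^sub>R Q)"
proof -
  obtain B where B: "B ** (mat 1 - g *\<^sub>R Q) = mat 1"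
    using matrix_left_invertible_ker[of "mat 1 - g *\<^sub>R Q"] IgQ_ker by blast
  have "(mat 1 - g *\<^sub>R Q) ** B = mat 1" by (subst matrix_left_right_inverse) (rule B)
  thus ?thesis unfolding invertible_def using B by blast
qed

definition Rv where "Rv = matrix_inv (mat 1 - g *\<^sub>R Q)"

lemma Rv_inv: "(mat 1 - g *\<^sub>R Q) ** Rv = mat 1 \<and> Rv ** (mat 1 - g *\<^sub>R Q) = mat 1"
  unfolding Rv_def matrix_inv_def by (rule someI_ex) (use IgQ_invertible in \<open>simp only: invertible_def\<close>)

lemma Rv_vec: "(mat 1 - g *\<^sub>R Q) *v (Rv *v e) = e"
  by (simp only: matrix_vector_mul_assoc Rv_inv matrix_vector_mul_lid)

lemma Rv_vec2: "Rv *v ((mat 1 - g *\<^sub>R Q) *v v) = v"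
  by (simp only: matrix_vector_mul_assoc Rv_inv matrix_vector_mul_lid)

lemma Rv_nonneg_vec:
  assumes e: "\<And>k. 0 \<le> e$k"
  shows "0 \<le> (Rv *v e)$i"
proof -
  define v where "v = Rv *v e"
  have ve: "v$i = e$i + g * (\<Sum>j\<in>UNIV. Q$i$j * v$j)" for i
    using arg_cong[OF Rv_vec[of e], of "\<lambda>u. u$i"] unfolding v_def[symmetric]
    by (simp add: IgQ_apply)
  define m where "m = Min (range (\<lambda>j. v$j))"
  have mle: "m \<le> v$j" for j unfolding m_def by (intro Min_le) auto
  have "m \<in> range (\<lambda>j. v$j)" unfolding m_def by (rule Min_in) auto
  then obtain i0 where i0: "v$i0 = m" by auto
  have "m \<le> (\<Sum>j\<in>UNIV. Q$i0$j * v$j)" using mle by (intro stoch_avg_ge Q)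
  hence "g * m \<le> g * (\<Sum>j\<in>UNIV. Q$i0$j * v$j)" using g0 by (intro mult_left_mono)
  hence "g * m \<le> m" using ve[of i0] e[of i0] i0 by linarith
  hence "0 \<le> (1 - g) * m" by (simp add: algebra_simps)
  moreover have "0 < 1 - g" using g1 by simp
  ultimately have "0 \<le> m" by (simp add: zero_le_mult_iff)
  thus ?thesis using mle[of i] unfolding v_def by simp
qed

lemma Rv_nonneg: "0 \<le> Rv$i$j"
proof -
  have "(Rv *v (\<chi> k. if k = j then 1 else 0))$i = Rv$i$j"
    by (simp add: matrix_vector_mult_def if_distrib cong: if_cong)
  moreover have "0 \<le> (Rv *v (\<chi> k. if k = j then 1 else 0))$i"
    by (intro Rv_nonneg_vec) simp
  ultimately show ?thesis by simp
qed

lemma Rv_rowsum: "(\<Sum>j\<in>UNIV. Rv$i$j) = 1 / (1 - g)"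
proof -
  let ?one = "(\<chi> k. 1) :: real^'x"
  have "(mat 1 - g *\<^sub>R Q) *v ?one = (1 - g) *\<^sub>R ?one"
    using Q by (simp add: vec_eq_iff IgQ_apply stoch_def)
  hence "?one = Rv *v ((1 - g) *\<^sub>R ?one)" using Rv_vec2[of ?one] by simp
  also have "\<dots> = (1 - g) *\<^sub>R (Rv *v ?one)" by (simp add: matrix_vector_mult_scaleR)
  finally have "1 = (1 - g) * (Rv *v ?one)$i" by (simp add: vec_eq_iff)
  moreover have "(Rv *v ?one)$i = (\<Sum>j\<in>UNIV. Rv$i$j)" by (simp add: matrix_vector_mult_def)
  ultimately show ?thesis using g1 by (simp add: field_simps)
qed

end

lemma mm_row: "(X ** Y)$i = (\<Sum>j\<in>UNIV. X$i$j *\<^sub>R Y$j)"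
  by (simp add: vec_eq_iff matrix_matrix_mult_def sum_component)

lemma mm_diff_left: "(A - B) ** C = A ** C - B ** (C::real^'x::finite^'x)"
  by (simp add: vec_eq_iff matrix_matrix_mult_def sum_subtractf left_diff_distrib)

lemma mm_diff_right: "C ** (A - B) = C ** A - C ** (B::real^'x::finite^'x)"
  by (simp add: vec_eq_iff matrix_matrix_mult_def sum_subtractf right_diff_distrib)

lemma mm_scale_right: "C ** (a *\<^sub>R B) = a *\<^sub>R (C ** (B::real^'x::finite^'x))"
  by (simp add: vec_eq_iff matrix_matrix_mult_def sum_distrib_left mult_ac)

lemma diag_entry: "(A ** M ** transpose B)$i$i = ipM M (A$i) (B$i)"
proof -
  have "(A ** M ** transpose B)$i$i = (\<Sum>l\<in>UNIV. (\<Sum>k\<in>UNIV. A$i$k * M$k$l) * B$i$l)"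
    by (simp add: matrix_matrix_mult_def transpose_def)
  also have "\<dots> = (\<Sum>l\<in>UNIV. \<Sum>k\<in>UNIV. A$i$k * M$k$l * B$i$l)"
    by (simp add: sum_distrib_right)
  also have "\<dots> = (\<Sum>k\<in>UNIV. \<Sum>l\<in>UNIV. A$i$k * M$k$l * B$i$l)"
    by (rule sum.swap)
  finally show ?thesis by (simp add: ipM_expand)
qed

lemma exponent_bound:
  fixes s L :: real
  assumes L: "L \<ge> 1" and s0: "s \<ge> 0" and s: "s^2 \<ge> 32 * L"
  shows "7/10 * s - 2 > 0" "(7/10 * s - 2)^2 / 2 \<ge> L"
proof -
  have "s^2 \<ge> 32" using L s by linarith
  have s5: "s \<ge> 5"
  proof (rule ccontr)
    assume "\<not> s \<ge> 5"
    hence "s^2 < 5^2" using s0 by (intro power_strict_mono) auto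
    thus False using \<open>s^2 \<ge> 32\<close> by simp
  qed
  show "7/10 * s - 2 > 0" using s5 by simp
  have "0 \<le> (s - 5) * (s - 2)" using s5 by (intro mult_nonneg_nonneg) auto
  moreover have "(7/10 * s - 2)^2 - s^2 / 16 = 2/5 * ((s - 5) * (s - 2)) + 11/400 * s^2"
    by (simp add: power2_eq_square algebra_simps)
  ultimately have "(7/10 * s - 2)^2 - s^2 / 16 \<ge> 0" by simp
  thus "(7/10 * s - 2)^2 / 2 \<ge> L" using s by simp
qed

context psdM
begin

lemma conc_row:
  fixes D :: "'a pmf" and \<phi> :: "'a \<Rightarrow> real^'x" and \<mu> :: "real^'x" and B L g :: real and n :: nat
  assumes fin: "finite (set_pmf D)"
    and mean: "\<And>l. measure_pmf.expectation D (\<lambda>s. \<phi> s $ l) = \<mu> $ l"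
    and bphi: "\<And>s. qn (\<phi> s) \<le> B" and bmu: "qn \<mu> \<le> B"
    and n: "n > 0" and L: "L \<ge> 1" and g1: "g < 1" and nL: "(1 - g)^2 * real n \<ge> 32 * L"
  shows "measure_pmf.prob (Pi_pmf {..<n} d (\<lambda>_. D))
           {w. qn (\<Sum>t<n. \<phi> (w t) - \<mu>) > real n * (7/10) * (1 - g) * B} \<le> exp (- L)"
proof -
  let ?Q = "Pi_pmf {..<n} d (\<lambda>_. D)"
  define Y where "Y s = \<phi> s - \<mu>" for s
  define f where "f w = qn (\<Sum>t<n. Y (w t))" for w
  have B0: "0 \<le> B" using bmu qn_nonneg[of \<mu>] by linarith
  have qY: "qn (Y s) \<le> 2 * B" for s
    using qn_diff[of "\<phi> s" \<mu>] bphi[of s] bmu unfolding Y_def by linarith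
  show ?thesis
  proof (cases "B = 0")
    case True
    have q0: "qn (\<Sum>t<n. Y (w t)) \<le> 0" for w
    proof -
      have "qn (\<Sum>t<n. Y (w t)) \<le> (\<Sum>t<n. qn (Y (w t)))" by (rule qn_sum)
      also have "\<dots> \<le> (\<Sum>t<n. 0)" using qY True by (intro sum_mono) auto
      finally show ?thesis by simp
    qed
    hence "{w. qn (\<Sum>t<n. \<phi> (w t) - \<mu>) > real n * (7/10) * (1 - g) * B} = {}"
    proof (intro equalityI subsetI)
      fix w assume "w \<in> {w. qn (\<Sum>t<n. \<phi> (w t) - \<mu>) > real n * (7/10) * (1 - g) * B}"
      hence "qn (\<Sum>t<n. Y (w t)) > 0" using True unfolding Y_def by simp
      with q0[of w] show "w \<in> {}" by simp
    qed simp
    thus ?thesis by simp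
  next
    case False
    hence Bp: "B > 0" using B0 by simp
    have finQ: "finite (set_pmf ?Q)" by (intro finite_set_Pi_pmf fin) auto
    have mean0: "measure_pmf.expectation D (\<lambda>s. Y s $ l) = 0" for l
    proof -
      have "measure_pmf.expectation D (\<lambda>s. Y s $ l) = measure_pmf.expectation D (\<lambda>s. \<phi> s $ l) - \<mu> $ l"
        unfolding Y_def by (simp add: Bochner_Integration.integral_diff integrable_measure_pmf_finite[OF fin])
      thus ?thesis using mean by simp
    qed
    have sm: "measure_pmf.expectation ?Q (\<lambda>w. ipM M (\<Sum>t<n. Y (w t)) (\<Sum>t<n. Y (w t))) \<le> real n * (2 * B)^2"
    proof (rule second_moment[OF fin mean0])
      fix s
      have "ipM M (Y s) (Y s) = (qn (Y s))^2" by (simp add: qn_sq)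
      also have "\<dots> \<le> (2 * B)^2" using qY[of s] qn_nonneg[of "Y s"] by (intro power_mono) auto
      finally show "ipM M (Y s) (Y s) \<le> (2 * B)^2" .
    qed
    have Ef: "measure_pmf.expectation ?Q f \<le> 2 * B * sqrt (real n)"
    proof -
      have "measure_pmf.expectation ?Q f \<le> sqrt (measure_pmf.expectation ?Q (\<lambda>w. (f w)^2))"
        by (rule exp_le_sqrt_sq[OF finQ])
      also have "(\<lambda>w. (f w)^2) = (\<lambda>w. ipM M (\<Sum>t<n. Y (w t)) (\<Sum>t<n. Y (w t)))"
        unfolding f_def by (simp add: qn_sq)
      also have "sqrt (measure_pmf.expectation ?Q \<dots>) \<le> sqrt (real n * (2 * B)^2)"
        using sm by (rule real_sqrt_le_mono)
      also have "\<dots> = 2 * B * sqrt (real n)" using Bp by (simp add: real_sqrt_mult)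
      finally show ?thesis .
    qed
    have bd: "\<bar>f (w(i:=x)) - f (w(i:=y))\<bar> \<le> 2 * B" if i: "i < n" for w i x y
    proof -
      have "(\<Sum>t<n. Y ((w(i:=x)) t)) = (\<Sum>t<n. Y ((w(i:=y)) t)) + (Y x - Y y)"
      proof -
        have "(\<Sum>t<n. Y ((w(i:=x)) t)) = Y x + (\<Sum>t\<in>{..<n} - {i}. Y (w t))"
          using i by (subst sum.remove[of _ i]) (auto intro!: sum.cong)
        moreover have "(\<Sum>t<n. Y ((w(i:=y)) t)) = Y y + (\<Sum>t\<in>{..<n} - {i}. Y (w t))"
          using i by (subst sum.remove[of _ i]) (auto intro!: sum.cong)
        ultimately show ?thesis by (simp add: algebra_simps)
      qed
      moreover have "qn (Y x - Y y) \<le> 2 * B"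
        unfolding Y_def using qn_diff[of "\<phi> x" "\<phi> y"] bphi[of x] bphi[of y] by simp
      moreover have "\<bar>qn (a + b) - qn a\<bar> \<le> qn b" for a b
        using qn_add[of a b] qn_diff[of "a + b" b] by (simp add: abs_le_iff)
      ultimately show ?thesis unfolding f_def by (metis order_trans)
    qed
    define s where "s = (1 - g) * sqrt (real n)"
    have s0: "s \<ge> 0" unfolding s_def using g1 by simp
    have s2: "s^2 = (1 - g)^2 * real n" unfolding s_def by (simp add: power_mult_distrib)
    have sp: "7/10 * s - 2 > 0" and sL: "(7/10 * s - 2)^2 / 2 \<ge> L"
      using exponent_bound[OF L s0] nL s2 by auto
    define t where "t = B * sqrt (real n) * (7/10 * s - 2)"
    have sn: "sqrt (real n) > 0" using n by simp
    have t: "t > 0" unfolding t_def using Bp sp sn by simp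
    have thr: "real n * (7/10) * (1 - g) * B = 2 * B * sqrt (real n) + t"
    proof -
      have gen: "2 * B * r + B * r * (7/10 * ((1 - g) * r) - 2) = 7/10 * (1 - g) * B * r^2" for r :: real
        by (simp add: power2_eq_square algebra_simps)
      have "2 * B * sqrt (real n) + t = 7/10 * (1 - g) * B * (sqrt (real n))^2"
        unfolding t_def s_def by (rule gen)
      thus ?thesis by simp
    qed
    have sub: "{w. qn (\<Sum>t<n. \<phi> (w t) - \<mu>) > real n * (7/10) * (1 - g) * B}
               \<subseteq> {w. f w - measure_pmf.expectation ?Q f \<ge> t}"
      using Ef unfolding thr f_def Y_def by auto
    have "measure_pmf.prob ?Q {w. qn (\<Sum>t<n. \<phi> (w t) - \<mu>) > real n * (7/10) * (1 - g) * B}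
        \<le> measure_pmf.prob ?Q {w. f w - measure_pmf.expectation ?Q f \<ge> t}"
      by (rule measure_pmf.finite_measure_mono[OF sub]) simp
    also have "\<dots> \<le> exp (- 2 * t^2 / (real n * (2 * B)^2))"
      using Bp by (intro mcdiarmid_tail[OF fin t _ n] bd) auto
    also have "- 2 * t^2 / (real n * (2 * B)^2) = - ((7/10 * s - 2)^2 / 2)"
    proof -
      have "t^2 = B^2 * real n * (7/10 * s - 2)^2" unfolding t_def by (simp add: power_mult_distrib)
      thus ?thesis using Bp n by (simp add: power_mult_distrib field_simps)
    qed
    also have "exp \<dots> \<le> exp (- L)" using sL by simp
    finally show ?thesis .
  qed
qed

end

lemma empirical_entry: "empirical n w $ x $ y = (1 / real n) * (\<Sum>i<n. if w i x = y then 1 else 0)"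
  by (simp add: empirical_def Zmat_def sum_component)

lemma stoch_empirical:
  assumes n: "n > 0" shows "stoch (empirical n w)"
proof -
  have cnt: "(\<Sum>y\<in>UNIV. \<Sum>i<n. (if w i x = y then 1 else 0::real)) = real n" for x
    by (subst sum.swap) simp
  have "(\<Sum>y\<in>UNIV. empirical n w $ x $ y) = 1" for x
    unfolding empirical_entry using n by (simp add: sum_divide_distrib[symmetric] cnt)
  moreover have "0 \<le> empirical n w $ x $ y" for x y
    unfolding empirical_entry by (intro mult_nonneg_nonneg sum_nonneg) auto
  ultimately show ?thesis unfolding stoch_def by auto
qed

lemma empirical_row_comb:
  fixes v :: "'x::finite \<Rightarrow> real^'y::finite"
  shows "(\<Sum>k\<in>UNIV. empirical n w $ j $ k *\<^sub>R v k) = (1 / real n) *\<^sub>R (\<Sum>t<n. v (w t j))"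
proof -
  have "(\<Sum>k\<in>UNIV. empirical n w $ j $ k *\<^sub>R v k)
      = (\<Sum>k\<in>UNIV. (1 / real n) *\<^sub>R (\<Sum>t<n. (if w t j = k then 1 else 0) *\<^sub>R v k))"
    by (intro sum.cong refl) (simp add: empirical_entry scaleR_sum_left[symmetric])
  also have "\<dots> = (1 / real n) *\<^sub>R (\<Sum>t<n. \<Sum>k\<in>UNIV. (if w t j = k then 1 else 0) *\<^sub>R v k)"
    by (simp add: scaleR_sum_right[symmetric] sum.swap[of _ UNIV])
  also have "\<dots> = (1 / real n) *\<^sub>R (\<Sum>t<n. v (w t j))"
  proof -
    have "(\<Sum>k\<in>UNIV. (if w t j = k then 1 else 0::real) *\<^sub>R v k) = v (w t j)" for t
    proof -
      have "(\<lambda>k. (if w t j = k then 1 else 0::real) *\<^sub>R v k) = (\<lambda>k. if w t j = k then v k else 0)"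
        by auto
      thus ?thesis unfolding \<open>(\<lambda>k. _) = _\<close> by (simp add: sum.delta')
    qed
    thus ?thesis by simp
  qed
  finally show ?thesis .
qed

lemma diag_norm_le:
  fixes A :: "real^'x::finite^'x"
  assumes "\<And>i. \<bar>A$i$i\<bar> \<le> c"
  shows "diag_norm A \<le> c"
  unfolding diag_norm_def using assms by (subst Max_le_iff) auto

lemma diag_norm_ge: "\<bar>A$i$i\<bar> \<le> diag_norm (A :: real^'x::finite^'x)"
  unfolding diag_norm_def by (intro Max_ge) auto

context psdM
begin

lemma resolvent_row:
  fixes P Q :: "real^'x^'x" and g :: real
  assumes P: "stoch P" and Q: "stoch Q" and g0: "0 \<le> g" and g1: "g < 1"
  shows "Rv Q g $ i = Rv P g $ i + (\<Sum>j\<in>UNIV. Rv Q g $ i $ j *\<^sub>R (g *\<^sub>R (\<Sum>k\<in>UNIV. (Q - P) $ j $ k *\<^sub>R Rv P g $ k)))"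
proof -
  let ?A = "Rv Q g" and ?R = "Rv P g"
  have iP: "(mat 1 - g *\<^sub>R P) ** ?R = mat 1" using Rv_inv[OF P g0 g1] by simp
  have iQ: "?A ** (mat 1 - g *\<^sub>R Q) = mat 1" using Rv_inv[OF Q g0 g1] by simp
  have "?A - ?R = ?A ** ((mat 1 - g *\<^sub>R P) ** ?R) - (?A ** (mat 1 - g *\<^sub>R Q)) ** ?R"
    by (simp add: iP iQ matrix_mul_rid matrix_mul_lid)
  also have "\<dots> = ?A ** (((mat 1 - g *\<^sub>R P) - (mat 1 - g *\<^sub>R Q)) ** ?R)"
    by (simp add: mm_diff_left mm_diff_right matrix_mul_assoc)
  also have "(mat 1 - g *\<^sub>R P) - (mat 1 - g *\<^sub>R Q) = g *\<^sub>R (Q - P)"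
    by (simp add: algebra_simps)
  finally have "?A = ?R + ?A ** ((g *\<^sub>R (Q - P)) ** ?R)" by (simp add: algebra_simps)
  hence "?A $ i = ?R $ i + (?A ** ((g *\<^sub>R (Q - P)) ** ?R)) $ i" by (metis vector_add_component)
  also have "(?A ** ((g *\<^sub>R (Q - P)) ** ?R)) $ i
      = (\<Sum>j\<in>UNIV. ?A $ i $ j *\<^sub>R (g *\<^sub>R (\<Sum>k\<in>UNIV. (Q - P) $ j $ k *\<^sub>R ?R $ k)))"
    by (simp add: mm_row scaleR_sum_right)
  finally show ?thesis .
qed

lemma row_qn_bound:
  fixes P Q :: "real^'x^'x" and g B e :: real
  assumes P: "stoch P" and Q: "stoch Q" and g0: "0 \<le> g" and g1: "g < 1"
    and qR: "qn (Rv P g $ i) \<le> B"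
    and qh: "\<And>j. qn (\<Sum>k\<in>UNIV. (Q - P) $ j $ k *\<^sub>R Rv P g $ k) \<le> e"
  shows "qn (Rv Q g $ i) \<le> B + g / (1 - g) * e"
proof -
  let ?A = "Rv Q g" and ?R = "Rv P g"
  let ?h = "\<lambda>j. (\<Sum>k\<in>UNIV. (Q - P) $ j $ k *\<^sub>R ?R $ k)"
  have "qn (?A $ i) \<le> qn (?R $ i) + qn (\<Sum>j\<in>UNIV. ?A $ i $ j *\<^sub>R (g *\<^sub>R ?h j))"
    by (subst resolvent_row[OF P Q g0 g1]) (rule qn_add)
  also have "qn (\<Sum>j\<in>UNIV. ?A $ i $ j *\<^sub>R (g *\<^sub>R ?h j)) \<le> (\<Sum>j\<in>UNIV. qn (?A $ i $ j *\<^sub>R (g *\<^sub>R ?h j)))"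
    by (rule qn_sum)
  also have "\<dots> = (\<Sum>j\<in>UNIV. ?A $ i $ j * g * qn (?h j))"
    using Rv_nonneg[OF Q g0 g1] g0 by (simp add: qn_scale)
  also have "\<dots> \<le> (\<Sum>j\<in>UNIV. ?A $ i $ j * g * e)"
    using Rv_nonneg[OF Q g0 g1] g0 qh by (intro sum_mono mult_left_mono) auto
  also have "\<dots> = g * e * (\<Sum>j\<in>UNIV. ?A $ i $ j)"
    by (simp add: sum_distrib_left mult_ac)
  also have "\<dots> = g / (1 - g) * e"
    using Rv_rowsum[OF Q g0 g1] by simp
  finally show ?thesis using qR by simp
qed

end

lemma pmf_row_pmf:
  assumes "row_stochastic P"
  shows "pmf (row_pmf P j) k = P$j$k"
proof -
  have nn: "\<And>y. 0 \<le> P$j$y" using assms unfolding row_stochastic_def by auto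
  have "(\<integral>\<^sup>+ y. ennreal (P$j$y) \<partial>count_space UNIV) = (\<Sum>y\<in>UNIV. ennreal (P$j$y))"
    by (simp add: nn_integral_count_space_finite)
  also have "\<dots> = ennreal (\<Sum>y\<in>UNIV. P$j$y)" using nn by simp
  also have "\<dots> = 1" using assms unfolding row_stochastic_def by simp
  finally show ?thesis unfolding row_pmf_def using nn by (subst pmf_embed_pmf) auto
qed

lemma sample_mean:
  fixes R :: "real^'x::finite^'x"
  assumes "row_stochastic P"
  shows "measure_pmf.expectation (sample_pmf P) (\<lambda>s. R $ (s j) $ l) = (\<Sum>k\<in>UNIV. P$j$k *\<^sub>R R$k) $ l"
proof -
  have map: "map_pmf (\<lambda>s. s j) (sample_pmf P) = row_pmf P j"
    unfolding sample_pmf_def by (subst Pi_pmf_component) auto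
  have "measure_pmf.expectation (sample_pmf P) (\<lambda>s. R $ (s j) $ l)
      = measure_pmf.expectation (map_pmf (\<lambda>s. s j) (sample_pmf P)) (\<lambda>k. R $ k $ l)"
    by simp
  also have "\<dots> = (\<Sum>k\<in>UNIV. R $ k $ l * pmf (row_pmf P j) k)"
    unfolding map by (rule integral_measure_pmf_real) auto
  also have "\<dots> = (\<Sum>k\<in>UNIV. P$j$k *\<^sub>R R$k) $ l"
    using assms by (simp add: pmf_row_pmf sum_component mult.commute)
  finally show ?thesis .
qed

theorem lemma1:
  fixes P M :: "real^'x::finite^'x" and \<gamma> \<delta> :: real and nh :: nat
  assumes "row_stochastic P"
    and "0 < \<gamma>" "\<gamma> < 1"
    and "0 < \<delta>" "\<delta> < 1"
    and "real nh \<ge> 32 * ln (4 * real (CARD('x))^2 / \<delta>) / (1 - \<gamma>)^2"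
    and "psd M"
  shows "measure_pmf.prob (pair_pmf (samples_pmf P nh) (samples_pmf P nh))
     {(\<omega>1, \<omega>2).
        diag_norm (matrix_inv (mat 1 - \<gamma> *\<^sub>R empirical nh \<omega>1) ** M **
                   transpose (matrix_inv (mat 1 - \<gamma> *\<^sub>R empirical nh \<omega>2)))
        \<le> 3 * diag_norm (matrix_inv (mat 1 - \<gamma> *\<^sub>R P) ** M **
                   transpose (matrix_inv (mat 1 - \<gamma> *\<^sub>R P)))}
     \<ge> 1 - \<delta>"
proof -
  note rs = assms(1) and g0' = assms(2) and g1 = assms(3) and d0 = assms(4) and d1 = assms(5)
  have g0: "0 \<le> \<gamma>" using g0' by simp
  interpret psdM M using assms(7) unfolding psd_def by unfold_locales auto
  have P: "stoch P" using rs unfolding row_stochastic_def stoch_def .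
  define N where "N = real (CARD('x))"
  have N1: "N \<ge> 1" unfolding N_def by simp
  define L where "L = ln (4 * N^2 / \<delta>)"
  have pos: "0 < 4 * N^2 / \<delta>" using N1 d0 by simp
  have "exp 1 \<le> 4 * N^2 / \<delta>"
  proof -
    have "exp 1 \<le> (3::real)" by (rule exp_le)
    also have "\<dots> \<le> 4 * N^2" using one_le_power[OF N1, of 2] by simp
    also have "\<dots> \<le> 4 * N^2 / \<delta>" using d0 d1 N1 by (simp add: le_divide_eq)
    finally show ?thesis .
  qed
  hence L1: "L \<ge> 1" unfolding L_def using pos by (subst ln_ge_iff) auto
  have gsq: "0 < (1 - \<gamma>)^2" using g1 by simp
  have nL: "(1 - \<gamma>)^2 * real nh \<ge> 32 * L"
    using assms(6) gsq unfolding L_def N_def by (simp add: divide_le_eq mult.commute)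
  have n0: "nh > 0"
  proof -
    have "0 < 32 * L" using L1 by simp
    also have "\<dots> \<le> (1 - \<gamma>)^2 * real nh" by (rule nL)
    finally show ?thesis by (simp add: zero_less_mult_iff)
  qed
  define R where "R = Rv P \<gamma>"
  define \<sigma> where "\<sigma> = diag_norm (R ** M ** transpose R)"
  define B where "B = sqrt \<sigma>"
  have \<sigma>0: "0 \<le> \<sigma>" unfolding \<sigma>_def using diag_norm_ge[of "R ** M ** transpose R" undefined] by simp
  have B0: "0 \<le> B" unfolding B_def using \<sigma>0 by simp
  have BB: "B^2 = \<sigma>" unfolding B_def using \<sigma>0 by simp
  have qR: "qn (R$k) \<le> B" for k
  proof -
    have "ipM M (R$k) (R$k) = (R ** M ** transpose R)$k$k" by (simp add: diag_entry)
    also have "\<dots> \<le> \<sigma>" unfolding \<sigma>_def using diag_norm_ge[of "R ** M ** transpose R" k] by simp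
    finally show ?thesis unfolding qn_def B_def by (rule real_sqrt_le_mono)
  qed
  define \<mu> where "\<mu> j = (\<Sum>k\<in>UNIV. P$j$k *\<^sub>R R$k)" for j
  have bmu: "qn (\<mu> j) \<le> B" for j
  proof -
    have "qn (\<mu> j) \<le> (\<Sum>k\<in>UNIV. qn (P$j$k *\<^sub>R R$k))" unfolding \<mu>_def by (rule qn_sum)
    also have "\<dots> = (\<Sum>k\<in>UNIV. P$j$k * qn (R$k))" using P by (simp add: qn_scale stoch_def)
    also have "\<dots> \<le> (\<Sum>k\<in>UNIV. P$j$k * B)" using P qR by (intro sum_mono mult_left_mono) (auto simp: stoch_def)
    also have "\<dots> = B" using P by (simp add: stoch_def sum_distrib_right[symmetric])
    finally show ?thesis .
  qed
  define thr where "thr = real nh * (7/10) * (1 - \<gamma>) * B"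
  define F where "F j w = (\<Sum>t<nh. R $ (w t j) - \<mu> j)" for j w
  define Good where "Good = {w. \<forall>j. qn (F j w) \<le> thr}"
  have rowb: "qn (Rv (empirical nh w) \<gamma> $ i) \<le> 17/10 * B" if w: "w \<in> Good" for w i
  proof -
    let ?E = "empirical nh w"
    have qh: "qn (\<Sum>k\<in>UNIV. (?E - P) $ j $ k *\<^sub>R Rv P \<gamma> $ k) \<le> 7/10 * (1 - \<gamma>) * B" for j
    proof -
      have "(\<Sum>k\<in>UNIV. (?E - P) $ j $ k *\<^sub>R Rv P \<gamma> $ k) = (\<Sum>k\<in>UNIV. ?E $ j $ k *\<^sub>R R $ k) - \<mu> j"
        unfolding \<mu>_def R_def by (simp add: scaleR_diff_left sum_subtractf)
      also have "\<dots> = (1 / real nh) *\<^sub>R (\<Sum>t<nh. R $ (w t j)) - \<mu> j"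
        by (simp add: empirical_row_comb)
      also have "\<dots> = (1 / real nh) *\<^sub>R F j w"
        unfolding F_def using n0 by (simp add: sum_subtractf scaleR_diff_right sum_constant_scaleR del: sum_constant)
      finally have "qn (\<Sum>k\<in>UNIV. (?E - P) $ j $ k *\<^sub>R Rv P \<gamma> $ k) = (1 / real nh) * qn (F j w)"
        by (simp add: qn_scale)
      also have "\<dots> \<le> (1 / real nh) * thr"
        using w unfolding Good_def by (intro mult_left_mono) auto
      also have "\<dots> = 7/10 * (1 - \<gamma>) * B" unfolding thr_def using n0 by simp
      finally show ?thesis .
    qed
    have "qn (Rv ?E \<gamma> $ i) \<le> B + \<gamma> / (1 - \<gamma>) * (7/10 * (1 - \<gamma>) * B)"
      by (rule row_qn_bound[OF P stoch_empirical[OF n0] g0 g1]) (use qR qh in \<open>auto simp: R_def\<close>)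
    also have "\<dots> = B + 7/10 * \<gamma> * B" using g1 by (simp add: field_simps)
    also have "\<dots> \<le> 17/10 * B" using mult_right_mono[of \<gamma> 1 B] g1 B0 by (simp add: mult.commute)
    finally show ?thesis .
  qed
  have det: "diag_norm (Rv (empirical nh w1) \<gamma> ** M ** transpose (Rv (empirical nh w2) \<gamma>)) \<le> 3 * \<sigma>"
    if "w1 \<in> Good" "w2 \<in> Good" for w1 w2
  proof (rule diag_norm_le)
    fix i
    have "\<bar>(Rv (empirical nh w1) \<gamma> ** M ** transpose (Rv (empirical nh w2) \<gamma>)) $ i $ i\<bar>
        \<le> qn (Rv (empirical nh w1) \<gamma> $ i) * qn (Rv (empirical nh w2) \<gamma> $ i)"
      by (simp add: diag_entry cs)
    also have "\<dots> \<le> (17/10 * B) * (17/10 * B)"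
      using rowb[OF that(1)] rowb[OF that(2)] qn_nonneg B0 by (intro mult_mono) auto
    also have "\<dots> = 289/100 * B^2" by (simp add: power2_eq_square)
    also have "\<dots> \<le> 3 * \<sigma>" using BB \<sigma>0 by simp
    finally show "\<bar>(Rv (empirical nh w1) \<gamma> ** M ** transpose (Rv (empirical nh w2) \<gamma>)) $ i $ i\<bar> \<le> 3 * \<sigma>" .
  qed
  let ?S = "samples_pmf P nh"
  have finD: "finite (set_pmf (sample_pmf P))" by (rule finite_subset[OF subset_UNIV]) simp
  have badj: "measure_pmf.prob ?S {w. qn (F j w) > thr} \<le> exp (- L)" for j
    unfolding samples_pmf_def F_def thr_def
    by (rule conc_row[OF finD _ _ bmu n0 L1 g1 nL])
       (auto simp: sample_mean[OF rs] \<mu>_def qR)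
  have eL: "exp (- L) = \<delta> / (4 * N^2)"
    unfolding L_def using pos by (simp add: exp_minus exp_ln)
  have badG: "measure_pmf.prob ?S (- Good) \<le> \<delta> / 4"
  proof -
    have "- Good = (\<Union>j\<in>UNIV. {w. qn (F j w) > thr})" unfolding Good_def by (auto simp: not_le) (metis leD)
    hence "measure_pmf.prob ?S (- Good) \<le> (\<Sum>j\<in>UNIV. measure_pmf.prob ?S {w. qn (F j w) > thr})"
      by (simp add: measure_pmf.finite_measure_subadditive_finite)
    also have "\<dots> \<le> (\<Sum>j\<in>(UNIV::'x set). exp (- L))" by (intro sum_mono badj)
    also have "\<dots> = N * (\<delta> / (4 * N^2))" unfolding eL N_def by simp
    also have "\<dots> = \<delta> / (4 * N)" using N1 by (simp add: power2_eq_square field_simps)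
    also have "\<dots> \<le> \<delta> / 4" using N1 d0 by (simp add: frac_le divide_le_eq mult_le_cancel_left1)
    finally show ?thesis .
  qed
  let ?T = "{(\<omega>1, \<omega>2).
        diag_norm (matrix_inv (mat 1 - \<gamma> *\<^sub>R empirical nh \<omega>1) ** M **
                   transpose (matrix_inv (mat 1 - \<gamma> *\<^sub>R empirical nh \<omega>2)))
        \<le> 3 * diag_norm (matrix_inv (mat 1 - \<gamma> *\<^sub>R P) ** M **
                   transpose (matrix_inv (mat 1 - \<gamma> *\<^sub>R P)))}"
  let ?PP = "pair_pmf ?S ?S"
  have sub: "Good \<times> Good \<subseteq> ?T"
  proof (intro subsetI)
    fix p assume "p \<in> Good \<times> Good"
    then obtain a b where p: "p = (a,b)" "a \<in> Good" "b \<in> Good" by auto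
    have e1: "Rv (empirical nh a) \<gamma> = matrix_inv (mat 1 - \<gamma> *\<^sub>R empirical nh a)"
      by (rule Rv_def[OF stoch_empirical[OF n0] g0 g1])
    have e2: "Rv (empirical nh b) \<gamma> = matrix_inv (mat 1 - \<gamma> *\<^sub>R empirical nh b)"
      by (rule Rv_def[OF stoch_empirical[OF n0] g0 g1])
    have e3: "Rv P \<gamma> = matrix_inv (mat 1 - \<gamma> *\<^sub>R P)"
      by (rule Rv_def[OF P g0 g1])
    show "p \<in> ?T" using det[OF p(2,3)] unfolding p \<sigma>_def R_def e1 e2 e3 by simp
  qed
  have sub2: "UNIV - Good \<times> Good \<subseteq> (fst -` (- Good)) \<union> (snd -` (- Good))" by auto
  have pf: "measure_pmf.prob ?PP (fst -` (- Good)) = measure_pmf.prob ?S (- Good)"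
    by (simp add: measure_map_pmf[symmetric] map_fst_pair_pmf)
  have ps: "measure_pmf.prob ?PP (snd -` (- Good)) = measure_pmf.prob ?S (- Good)"
    by (simp add: measure_map_pmf[symmetric] map_snd_pair_pmf)
  have "measure_pmf.prob ?PP (UNIV - Good \<times> Good) \<le> measure_pmf.prob ?PP ((fst -` (- Good)) \<union> (snd -` (- Good)))"
    by (rule measure_pmf.finite_measure_mono[OF sub2]) simp
  also have "\<dots> \<le> measure_pmf.prob ?PP (fst -` (- Good)) + measure_pmf.prob ?PP (snd -` (- Good))"
    by (subst measure_pmf.finite_measure_Union') (auto intro!: measure_pmf.finite_measure_mono)
  also have "\<dots> \<le> \<delta> / 2" unfolding pf ps using badG by simp
  finally have c: "measure_pmf.prob ?PP (UNIV - Good \<times> Good) \<le> \<delta> / 2" .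
  have "1 - \<delta> \<le> 1 - measure_pmf.prob ?PP (UNIV - Good \<times> Good)" using c d0 by simp
  also have "\<dots> = measure_pmf.prob ?PP (Good \<times> Good)"
    using measure_pmf.prob_compl[of "Good \<times> Good" ?PP] by simp
  also have "\<dots> \<le> measure_pmf.prob ?PP ?T"
    by (rule measure_pmf.finite_measure_mono[OF sub]) simp
  finally show ?thesis .
qed

end
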